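(* Let $N=\{1,\ldots,n\}$, $\mathcal{X}=\{-1,1\}^n$, and let $P\subseteq\Delta(\mathcal{X})$ be the convex hull of a finite set $\{p_j\}_{j\in M}\subsetneq\Delta(\mathcal{X})$, where $M=\{1,\ldots,m\}$. Then: (1) A deterministic voting rule $\phi$ is $P$-robust if and only if there exists a nonzero $w\in\mathbb{R}_+^n$ such that $$\frac{\sum_{i\in N} w_i r_i(\phi,p_j)}{\sum_{i\in N} w_i}>\frac12\quad\text{for all } j\in M.$$ In particular, a deterministic voting rule is robust (i.e. $\Delta(\mathcal{X})$-robust) if and only if it is a weighted majority rule with nonnegative weights such that there are no ties. (2) A deterministic voting rule $\phi$ is weakly $P$-robust if and only if there exists a nonzero $w\in\mathbb{R}_+^n$ such that $$\frac{\sum_{i\in N} w_i r_i(\phi,p_j)}{\sum_{i\in N} w_i}\geq\frac12\quad\text{for all } j\in M.$$ In particular, a deterministic voting rule is weakly robust (i.e. weakly $\Delta(\mathcal{X})$-robust) if and only if it is a weighted majority rule with nonnegative weights.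
   Context: A deterministic voting rule is a map $\phi:\mathcal{X}\to\{-1,1\}$. $\Delta(\mathcal{X})$ is the set of probability distributions on $\mathcal{X}$. For $p\in\Delta(\mathcal{X})$, the responsiveness of individual $i$ is $r_i(\phi,p)=p(\{x:\phi(x)=x_i\})$. For $P\subseteq\Delta(\mathcal{X})$, $\phi$ is $P$-robust if for every $p\in P$ there is at least one $i\in N$ with $r_i(\phi,p)>1/2$; $\phi$ is weakly $P$-robust if for every $p\in P$ there is at least one $i\in N$ with $r_i(\phi,p)\geq 1/2$. A weighted majority rule (WMR) with nonzero weight vector $w\in\mathbb{R}^n$ is a rule with $\phi(x)=1$ whenever $\sum_iw_ix_i>0$ and $\phi(x)=-1$ whenever $\sum_iw_ix_i<0$ (ties $\sum_iw_ix_i=0$ resolved arbitrarily); it has no ties if $\sum_iw_ix_i\neq0$ for all $x\in\mathcal{X}$. *)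

theory Defs
  imports Complex_Main
begin

text \<open>Individuals are N = {1..n}. A profile x \<in> X = {-1,1}^n is represented as a function
  nat \<Rightarrow> int with x i \<in> {-1,1} for i \<in> {1..n} and x i = 0 outside {1..n}.\<close>

definition profiles :: "nat \<Rightarrow> (nat \<Rightarrow> int) set" where
  "profiles n = {x. (\<forall>i\<in>{1..n}. x i = -1 \<or> x i = 1) \<and> (\<forall>i. i \<notin> {1..n} \<longrightarrow> x i = 0)}"

definition distributions :: "nat \<Rightarrow> ((nat \<Rightarrow> int) \<Rightarrow> real) set" where
  "distributions n = {p. (\<forall>x\<in>profiles n. 0 \<le> p x) \<and> (\<forall>x. x \<notin> profiles n \<longrightarrow> p x = 0)
                          \<and> sum p (profiles n) = 1}"

definition voting_rule :: "nat \<Rightarrow> ((nat \<Rightarrow> int) \<Rightarrow> int) \<Rightarrow> bool" where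
  "voting_rule n \<phi> \<longleftrightarrow> (\<forall>x\<in>profiles n. \<phi> x = -1 \<or> \<phi> x = 1)"

definition resp :: "nat \<Rightarrow> nat \<Rightarrow> ((nat \<Rightarrow> int) \<Rightarrow> int) \<Rightarrow> ((nat \<Rightarrow> int) \<Rightarrow> real) \<Rightarrow> real" where
  "resp n i \<phi> p = (\<Sum>x\<in>{x\<in>profiles n. \<phi> x = x i}. p x)"

definition robust :: "nat \<Rightarrow> ((nat \<Rightarrow> int) \<Rightarrow> real) set \<Rightarrow> ((nat \<Rightarrow> int) \<Rightarrow> int) \<Rightarrow> bool" where
  "robust n P \<phi> \<longleftrightarrow> (\<forall>p\<in>P. \<exists>i\<in>{1..n}. resp n i \<phi> p > 1/2)"

definition weakly_robust :: "nat \<Rightarrow> ((nat \<Rightarrow> int) \<Rightarrow> real) set \<Rightarrow> ((nat \<Rightarrow> int) \<Rightarrow> int) \<Rightarrow> bool" where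
  "weakly_robust n P \<phi> \<longleftrightarrow> (\<forall>p\<in>P. \<exists>i\<in>{1..n}. resp n i \<phi> p \<ge> 1/2)"

definition conv_family :: "nat \<Rightarrow> (nat \<Rightarrow> ((nat \<Rightarrow> int) \<Rightarrow> real)) \<Rightarrow> ((nat \<Rightarrow> int) \<Rightarrow> real) set" where
  "conv_family m p = {(\<lambda>x. \<Sum>j\<in>{1..m}. c j * p j x) | c.
      (\<forall>j\<in>{1..m}. 0 \<le> c j) \<and> (\<Sum>j\<in>{1..m}. c j) = 1}"

definition is_wmr :: "nat \<Rightarrow> (nat \<Rightarrow> real) \<Rightarrow> ((nat \<Rightarrow> int) \<Rightarrow> int) \<Rightarrow> bool" where
  "is_wmr n w \<phi> \<longleftrightarrow> (\<exists>i\<in>{1..n}. w i \<noteq> 0) \<and>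
     (\<forall>x\<in>profiles n. ((\<Sum>i\<in>{1..n}. w i * of_int (x i)) > 0 \<longrightarrow> \<phi> x = 1) \<and>
                       ((\<Sum>i\<in>{1..n}. w i * of_int (x i)) < 0 \<longrightarrow> \<phi> x = -1))"

definition no_ties :: "nat \<Rightarrow> (nat \<Rightarrow> real) \<Rightarrow> bool" where
  "no_ties n w \<longleftrightarrow> (\<forall>x\<in>profiles n. (\<Sum>i\<in>{1..n}. w i * of_int (x i)) \<noteq> 0)"

end

theory Submission imports Defs "HOL-Analysis.Analysis" begin
lemma quad_aux:
  fixes a b c :: real
  assumes H: "\<And>t. 0 < t \<Longrightarrow> t \<le> 1 \<Longrightarrow> a \<le> (1-t)^2*a + 2*t*(1-t)*b + t^2*c"
    and D: "a - 2*b + c \<ge> 0"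
  shows "b \<ge> a"
proof (rule ccontr)
  assume "\<not> b \<ge> a"
  hence ab: "a - b > 0" by simp
  define D where "D = a - 2*b + c"
  define t where "t = min 1 ((a-b)/(D+1))"
  have Dp: "D \<ge> 0" using D D_def by simp
  have t0: "0 < t" using ab Dp by (simp add: t_def)
  have t1: "t \<le> 1" by (simp add: t_def)
  have "t * D < a - b"
  proof -
    have "t * D \<le> (a-b)/(D+1) * D" using Dp by (intro mult_right_mono) (auto simp: t_def)
    also have "\<dots> < a - b" using ab Dp by (simp add: field_simps)
    finally show ?thesis .
  qed
  moreover have "a \<le> (1-t)^2*a + 2*t*(1-t)*b + t^2*c" using H t0 t1 by simp
  hence "0 \<le> t * (2*(b-a) + t*D)" by (simp add: D_def power2_eq_square algebra_simps)
  hence "0 \<le> 2*(b-a) + t*D" using t0 by (simp add: zero_le_mult_iff)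
  ultimately show False using ab by argo
qed

lemma compact_simplex_fun:
  assumes "finite S"
  shows "compact {l::'k \<Rightarrow> real. (\<forall>k. l k \<in> (if k \<in> S then {0..1} else {0})) \<and> sum l S = 1}"
proof -
  have "compact (Pi UNIV (\<lambda>k. if k \<in> S then {0..1::real} else {0}))"
  proof -
    have "compactin (product_topology (\<lambda>i. euclidean) UNIV) (PiE UNIV (\<lambda>k. if k \<in> S then {0..1::real} else {0}))"
      by (subst compactin_PiE) auto
    then show ?thesis by (simp add: euclidean_product_topology PiE_UNIV_domain)
  qed
  moreover have "closed {l::'k \<Rightarrow> real. sum l S = 1}"
    by (intro closed_Collect_eq continuous_intros continuous_on_sum continuous_on_product_coordinates) 
  ultimately have "compact (Pi UNIV (\<lambda>k. if k \<in> S then {0..1::real} else {0}) \<inter> {l. sum l S = 1})"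
    by blast
  moreover have "Pi UNIV (\<lambda>k. if k \<in> S then {0..1::real} else {0}) \<inter> {l. sum l S = 1} =
     {l::'k \<Rightarrow> real. (\<forall>k. l k \<in> (if k \<in> S then {0..1} else {0})) \<and> sum l S = 1}" by (simp add: Pi_def Int_def)
  ultimately show ?thesis by simp
qed

lemma closest_point:
  fixes G :: "'k \<Rightarrow> 'i \<Rightarrow> real"
  assumes S: "finite S" "S \<noteq> {}" and I: "finite I"
  shows "\<exists>l. (\<forall>k\<in>S. 0 \<le> l k) \<and> sum l S = 1 \<and>
     (\<forall>k\<in>S. (\<Sum>i\<in>I. (\<Sum>k'\<in>S. l k' * G k' i) * G k i) \<ge> (\<Sum>i\<in>I. (\<Sum>k'\<in>S. l k' * G k' i)^2))"
proof -
  define T where "T = {l::'k \<Rightarrow> real. (\<forall>k. l k \<in> (if k \<in> S then {0..1} else {0})) \<and> sum l S = 1}"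
  define f where "f = (\<lambda>l::'k\<Rightarrow>real. \<Sum>i\<in>I. (\<Sum>k\<in>S. l k * G k i)^2)"
  have cT: "compact T" unfolding T_def by (rule compact_simplex_fun[OF S(1)])
  obtain k0 where k0: "k0 \<in> S" using S by auto
  have "(\<lambda>k. if k = k0 then 1 else 0) \<in> T" using k0 S by (auto simp: T_def)
  hence neT: "T \<noteq> {}" by auto
  have "continuous_on UNIV f" unfolding f_def
    by (intro continuous_intros continuous_on_product_coordinates)
  hence cf: "continuous_on T f" by (rule continuous_on_subset) simp
  obtain l where lT: "l \<in> T" and lmin: "\<And>y. y \<in> T \<Longrightarrow> f l \<le> f y"
    using continuous_attains_inf[OF cT neT cf] by auto
  define z where "z = (\<lambda>i. \<Sum>k'\<in>S. l k' * G k' i)"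
  have main: "(\<Sum>i\<in>I. z i * G k i) \<ge> (\<Sum>i\<in>I. z i ^2)" if kS: "k \<in> S" for k
  proof (rule quad_aux)
    fix t :: real assume t0: "0 < t" and t1: "t \<le> 1"
    define l' where "l' = (\<lambda>k'. (1-t) * l k' + t * (if k' = k then 1 else 0))"
    have sl: "sum l S = 1" using lT by (simp add: T_def)
    have "l' \<in> T"
    proof -
      have "l' k' \<in> (if k' \<in> S then {0..1} else {0})" for k'
      proof -
        have "l k' \<in> (if k' \<in> S then {0..1} else {0})" using lT by (simp add: T_def)
        then show ?thesis using t0 t1 kS unfolding l'_def
          by (cases "k' \<in> S") (auto intro!: add_nonneg_nonneg mult_nonneg_nonneg
               simp: convex_bound_le[of "l k'" 1 "if k' = k then 1 else 0" "1-t" t, simplified])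
      qed
      moreover have "sum l' S = 1"
        unfolding l'_def using kS sl S(1) by (simp add: sum.distrib sum_distrib_left[symmetric])
      ultimately show ?thesis by (simp add: T_def)
    qed
    hence fl1: "f l \<le> f l'" by (rule lmin)
    have fl2: "f l = (\<Sum>i\<in>I. z i ^2)" by (simp add: f_def z_def)
    have "(\<Sum>k'\<in>S. l' k' * G k' i) = (1-t) * z i + t * G k i" for i
    proof -
      have "(\<Sum>k'\<in>S. l' k' * G k' i) = (\<Sum>k'\<in>S. (1-t) * (l k' * G k' i) + (if k' = k then t * G k i else 0))"
        unfolding l'_def by (rule sum.cong) (auto simp: algebra_simps)
      also have "\<dots> = (1-t) * z i + t * G k i"
        unfolding z_def using kS S(1) by (simp add: sum.distrib sum_distrib_left)
      finally show ?thesis .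
    qed
    hence "f l' = (\<Sum>i\<in>I. ((1-t) * z i + t * G k i)^2)" by (simp add: f_def)
    also have "\<dots> = (1-t)^2 * (\<Sum>i\<in>I. z i ^2) + 2*t*(1-t) * (\<Sum>i\<in>I. z i * G k i) + t^2 * (\<Sum>i\<in>I. G k i ^2)"
    proof -
      have "(\<Sum>i\<in>I. ((1-t) * z i + t * G k i)^2) = (\<Sum>i\<in>I. (1-t)^2 * z i ^2 + 2*t*(1-t) * (z i * G k i) + t^2 * G k i ^2)"
        by (rule sum.cong) (auto simp: power2_eq_square algebra_simps)
      then show ?thesis by (simp add: sum.distrib sum_distrib_left)
    qed
    finally show "(\<Sum>i\<in>I. z i ^2) \<le> (1-t)^2 * (\<Sum>i\<in>I. z i ^2) + 2*t*(1-t) * (\<Sum>i\<in>I. z i * G k i) + t^2 * (\<Sum>i\<in>I. G k i ^2)"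
      using fl1 fl2 by simp
  next
    have "(\<Sum>i\<in>I. z i ^2) - 2 * (\<Sum>i\<in>I. z i * G k i) + (\<Sum>i\<in>I. G k i ^2) = (\<Sum>i\<in>I. (z i - G k i)^2)"
      by (simp add: power2_eq_square algebra_simps sum.distrib sum_distrib_left sum_subtractf)
    also have "\<dots> \<ge> 0" by (intro sum_nonneg) simp
    finally show "(\<Sum>i\<in>I. z i ^2) - 2 * (\<Sum>i\<in>I. z i * G k i) + (\<Sum>i\<in>I. G k i ^2) \<ge> 0" .
  qed
  have "0 \<le> l k" if "k \<in> S" for k
  proof -
    have "l k \<in> (if k \<in> S then {0..1} else {0})" using lT by (simp add: T_def)
    then show ?thesis using that by simp
  qed
  moreover have "sum l S = 1" using lT by (simp add: T_def)
  ultimately show ?thesis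
    using main unfolding z_def by (intro exI[of _ l]) auto
qed

lemma alternative:
  fixes b :: "'j \<Rightarrow> 'i \<Rightarrow> real"
  assumes J: "finite J" and I: "finite I" "I \<noteq> {}"
    and no: "\<not>(\<exists>c. (\<forall>j\<in>J. 0 \<le> c j) \<and> sum c J = 1 \<and> (\<forall>i\<in>I. (\<Sum>j\<in>J. c j * b j i) \<le> 0))"
  shows "\<exists>w. (\<forall>i\<in>I. 0 \<le> w i) \<and> sum w I = 1 \<and> (\<forall>j\<in>J. (\<Sum>i\<in>I. w i * b j i) > 0)"
proof -
  define S :: "('j + 'i) set" where "S = Inl ` J \<union> Inr ` I"
  define G :: "('j + 'i) \<Rightarrow> 'i \<Rightarrow> real" where
    "G = (\<lambda>k. case k of Inl j \<Rightarrow> b j | Inr i \<Rightarrow> (\<lambda>i'. if i' = i then 1 else 0))"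
  have fS: "finite S" using J I by (simp add: S_def)
  have neS: "S \<noteq> {}" using I by (simp add: S_def)
  have sumS: "sum f S = (\<Sum>j\<in>J. f (Inl j)) + (\<Sum>i\<in>I. f (Inr i))" for f :: "'j + 'i \<Rightarrow> real"
    unfolding S_def using J I
    by (subst sum.union_disjoint) (auto simp: sum.reindex)
  obtain l where l0: "\<forall>k\<in>S. 0 \<le> l k" and l1: "sum l S = 1" and
    lopt: "\<forall>k\<in>S. (\<Sum>i\<in>I. (\<Sum>k'\<in>S. l k' * G k' i) * G k i) \<ge> (\<Sum>i\<in>I. (\<Sum>k'\<in>S. l k' * G k' i)^2)"
    using closest_point[OF fS neS I(1), of G] by blast
  define z where "z = (\<lambda>i. \<Sum>k'\<in>S. l k' * G k' i)"
  have zI: "z i = (\<Sum>j\<in>J. l (Inl j) * b j i) + l (Inr i)" if "i \<in> I" for i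
    unfolding z_def sumS using that I by (simp add: G_def if_distrib cong: if_cong)
  define N where "N = (\<Sum>i\<in>I. z i ^2)"
  have N0: "N \<ge> 0" unfolding N_def by (intro sum_nonneg) simp
  have Npos: "N > 0"
  proof (rule ccontr)
    assume "\<not> N > 0"
    hence "N = 0" using N0 by simp
    hence z0: "\<forall>i\<in>I. z i = 0" unfolding N_def using I by (subst (asm) sum_nonneg_eq_0_iff) auto
    define s where "s = (\<Sum>j\<in>J. l (Inl j))"
    have lJ: "\<forall>j\<in>J. 0 \<le> l (Inl j)" and lI: "\<forall>i\<in>I. 0 \<le> l (Inr i)" using l0 by (auto simp: S_def)
    have s0: "s \<ge> 0" unfolding s_def using lJ by (simp add: sum_nonneg)
    show False
    proof (cases "s = 0")
      case True
      hence "\<forall>j\<in>J. l (Inl j) = 0" unfolding s_def using J lJ by (subst (asm) sum_nonneg_eq_0_iff) auto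
      hence "\<forall>i\<in>I. l (Inr i) = 0" using z0 zI by simp
      hence "sum l S = 0" using \<open>\<forall>j\<in>J. l (Inl j) = 0\<close> by (simp add: sumS)
      thus False using l1 by simp
    next
      case False
      hence sp: "s > 0" using s0 by simp
      define c where "c = (\<lambda>j. l (Inl j) / s)"
      have "(\<forall>j\<in>J. 0 \<le> c j) \<and> sum c J = 1 \<and> (\<forall>i\<in>I. (\<Sum>j\<in>J. c j * b j i) \<le> 0)"
      proof (intro conjI ballI)
        show "0 \<le> c j" if "j \<in> J" for j using lJ that sp by (simp add: c_def)
        show "sum c J = 1" using sp by (simp add: c_def s_def sum_divide_distrib[symmetric])
        fix i assume iI: "i \<in> I"
        have "(\<Sum>j\<in>J. c j * b j i) = (\<Sum>j\<in>J. l (Inl j) * b j i) / s"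
          by (simp add: c_def sum_divide_distrib)
        also have "\<dots> = - l (Inr i) / s" proof -
          have "(\<Sum>j\<in>J. l (Inl j) * b j i) = - l (Inr i)" using zI[OF iI] z0 iI by simp
          thus ?thesis by simp
        qed
        also have "\<dots> \<le> 0" using lI iI sp by simp
        finally show "(\<Sum>j\<in>J. c j * b j i) \<le> 0" .
      qed
      thus False using no by blast
    qed
  qed
  have zpos: "z i \<ge> N" if "i \<in> I" for i
  proof -
    have "Inr i \<in> S" using that by (simp add: S_def)
    hence "(\<Sum>i'\<in>I. z i' * G (Inr i) i') \<ge> N" using lopt unfolding N_def z_def by blast
    thus ?thesis using that I by (simp add: G_def if_distrib cong: if_cong)
  qed
  have zb: "(\<Sum>i\<in>I. z i * b j i) \<ge> N" if "j \<in> J" for j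
  proof -
    have "Inl j \<in> S" using that by (simp add: S_def)
    hence "(\<Sum>i'\<in>I. z i' * G (Inl j) i') \<ge> N" using lopt unfolding N_def z_def by blast
    thus ?thesis by (simp add: G_def)
  qed
  define Z where "Z = sum z I"
  obtain i0 where i0: "i0 \<in> I" using I by auto
  have zp: "z i > 0" if "i \<in> I" for i using zpos[OF that] Npos by simp
  have Zpos: "Z > 0" unfolding Z_def
    using zp i0 I by (intro sum_pos2[of I i0]) (auto intro: less_imp_le)
  show ?thesis
  proof (intro exI[of _ "\<lambda>i. z i / Z"] conjI ballI)
    show "0 \<le> z i / Z" if "i \<in> I" for i using zpos[OF that] Npos Zpos by simp
    show "sum (\<lambda>i. z i / Z) I = 1" using Zpos by (simp add: Z_def sum_divide_distrib[symmetric])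
    fix j assume "j \<in> J"
    have "(\<Sum>i\<in>I. z i / Z * b j i) = (\<Sum>i\<in>I. z i * b j i) / Z"
      by (simp add: sum_divide_distrib)
    also have "\<dots> > 0" using zb[OF \<open>j \<in> J\<close>] Npos Zpos by simp
    finally show "(\<Sum>i\<in>I. z i / Z * b j i) > 0" .
  qed
qed


lemma finite_profiles: "finite (profiles n)"
proof -
  have "profiles n \<subseteq> (\<lambda>f i. if i \<in> {1..n} then f i else 0) ` (PiE {1..n} (\<lambda>_. {-1,1::int}))"
  proof
    fix x assume x: "x \<in> profiles n"
    have "x = (\<lambda>i. if i \<in> {1..n} then restrict x {1..n} i else 0)"
      using x by (auto simp: profiles_def)
    moreover have "restrict x {1..n} \<in> PiE {1..n} (\<lambda>_. {-1,1::int})"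
      using x by (auto simp: profiles_def)
    ultimately show "x \<in> (\<lambda>f i. if i \<in> {1..n} then f i else 0) ` (PiE {1..n} (\<lambda>_. {-1,1::int}))"
      by blast
  qed
  moreover have "finite (PiE {1..n} (\<lambda>_. {-1,1::int}))" by (intro finite_PiE) auto
  ultimately show ?thesis by (rule finite_subset[OF _ finite_imageI])
qed

lemma profiles_ne: "(\<lambda>i. if i \<in> {1..n} then 1 else 0) \<in> profiles n"
  by (auto simp: profiles_def)

lemma ind_eq:
  assumes "x \<in> profiles n" "i \<in> {1..n}" "voting_rule n \<phi>"
  shows "(if \<phi> x = x i then 1 else 0::real) = (1 + of_int (\<phi> x) * of_int (x i)) / 2"
proof -
  have "x i = -1 \<or> x i = 1" using assms by (auto simp: profiles_def)
  moreover have "\<phi> x = -1 \<or> \<phi> x = 1" using assms by (auto simp: voting_rule_def)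
  ultimately show ?thesis by auto
qed

lemma resp_ind:
  "resp n i \<phi> p = (\<Sum>x\<in>profiles n. p x * (if \<phi> x = x i then 1 else 0))"
  unfolding resp_def by (simp add: sum.inter_filter[OF finite_profiles] if_distrib cong: if_cong)

lemma resp_lin:
  "resp n i \<phi> (\<lambda>x. \<Sum>j\<in>J. c j * p j x) = (\<Sum>j\<in>J. c j * resp n i \<phi> (p j))"
  unfolding resp_def by (simp add: sum_distrib_left sum.swap[of _ J])

lemma wsum:
  assumes "voting_rule n \<phi>"
  shows "(\<Sum>i\<in>{1..n}. w i * resp n i \<phi> p) =
     ((\<Sum>i\<in>{1..n}. w i) * sum p (profiles n) +
      (\<Sum>x\<in>profiles n. p x * of_int (\<phi> x) * (\<Sum>i\<in>{1..n}. w i * of_int (x i)))) / 2"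
proof -
  have "(\<Sum>i\<in>{1..n}. w i * resp n i \<phi> p) =
        (\<Sum>i\<in>{1..n}. \<Sum>x\<in>profiles n. (w i * p x + p x * of_int (\<phi> x) * (w i * of_int (x i))) / 2)"
    unfolding resp_ind sum_distrib_left
    by (intro sum.cong refl) (simp add: ind_eq[OF _ _ assms] algebra_simps add_divide_distrib)
  also have "\<dots> = (\<Sum>i\<in>{1..n}. \<Sum>x\<in>profiles n. w i * p x) / 2 +
        (\<Sum>i\<in>{1..n}. \<Sum>x\<in>profiles n. p x * of_int (\<phi> x) * (w i * of_int (x i))) / 2"
    by (simp add: sum.distrib sum_divide_distrib[symmetric] add_divide_distrib)
  also have "\<dots> = ((\<Sum>i\<in>{1..n}. w i) * sum p (profiles n) +
      (\<Sum>x\<in>profiles n. p x * of_int (\<phi> x) * (\<Sum>i\<in>{1..n}. w i * of_int (x i)))) / 2"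
  proof -
    have A: "(\<Sum>i\<in>{1..n}. \<Sum>x\<in>profiles n. w i * p x) = (\<Sum>i\<in>{1..n}. w i) * sum p (profiles n)"
      by (simp add: sum_product)
    have "(\<Sum>i\<in>{1..n}. \<Sum>x\<in>profiles n. p x * of_int (\<phi> x) * (w i * of_int (x i)))
        = (\<Sum>x\<in>profiles n. \<Sum>i\<in>{1..n}. p x * of_int (\<phi> x) * (w i * of_int (x i)))"
      by (rule sum.swap)
    also have "\<dots> = (\<Sum>x\<in>profiles n. p x * of_int (\<phi> x) * (\<Sum>i\<in>{1..n}. w i * of_int (x i)))"
      by (simp add: sum_distrib_left)
    finally show ?thesis using A by (simp add: add_divide_distrib)
  qed
  finally show ?thesis .
qed

lemma pos_comb:
  fixes c a :: "'j \<Rightarrow> real"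
  assumes "finite J" "\<forall>j\<in>J. 0 \<le> c j" "sum c J = 1" "\<forall>j\<in>J. a j > 0"
  shows "(\<Sum>j\<in>J. c j * a j) > 0"
proof -
  obtain j0 where j0: "j0 \<in> J" "c j0 \<noteq> 0"
    using assms(3) by (metis sum.neutral zero_neq_one)
  have "0 < c j0 * a j0" using assms j0 by (metis mult_pos_pos order_le_neq_trans)
  then show ?thesis using assms j0
    by (intro sum_pos2[of J j0]) (auto intro: mult_nonneg_nonneg less_imp_le)
qed

lemma nonneg_comb:
  fixes c a :: "'j \<Rightarrow> real"
  assumes "\<forall>j\<in>J. 0 \<le> c j" "\<forall>j\<in>J. a j \<ge> 0"
  shows "(\<Sum>j\<in>J. c j * a j) \<ge> 0"
  using assms by (intro sum_nonneg) auto

lemma wpos: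
  fixes w :: "nat \<Rightarrow> real"
  assumes "\<forall>i\<in>{1..n}. 0 \<le> w i" "\<exists>i\<in>{1..n}. w i \<noteq> 0"
  shows "(\<Sum>i\<in>{1..n}. w i) > 0"
proof -
  obtain i0 where "i0 \<in> {1..n}" "w i0 \<noteq> 0" using assms by auto
  moreover have "0 < w i0" using assms calculation by (metis order_le_neq_trans)
  ultimately show ?thesis using assms by (intro sum_pos2[of _ i0]) auto
qed

lemma wresp_comb:
  "(\<Sum>i\<in>{1..n}. w i * resp n i \<phi> (\<lambda>x. \<Sum>j\<in>J. c j * p j x)) =
   (\<Sum>j\<in>J. c j * (\<Sum>i\<in>{1..n}. w i * resp n i \<phi> (p j)))"
  by (simp add: resp_lin sum_distrib_left sum.swap[of _ J] algebra_simps)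

lemma comb_half:
  fixes c a :: "'j \<Rightarrow> real"
  assumes "sum c J = 1"
  shows "(\<Sum>j\<in>J. c j * (a j - 1/2)) = (\<Sum>j\<in>J. c j * a j) - 1/2"
proof -
  have "(\<Sum>j\<in>J. c j * (a j - 1/2)) = (\<Sum>j\<in>J. c j * a j) - (\<Sum>j\<in>J. c j) / 2"
    by (simp add: right_diff_distrib sum_subtractf sum_divide_distrib)
  then show ?thesis using assms by simp
qed

lemma part1:
  assumes n: "1 \<le> n"
  shows "robust n (conv_family m p) \<phi> \<longleftrightarrow>
     (\<exists>w::nat \<Rightarrow> real. (\<forall>i\<in>{1..n}. 0 \<le> w i) \<and> (\<exists>i\<in>{1..n}. w i \<noteq> 0) \<and>
        (\<forall>j\<in>{1..m}. (\<Sum>i\<in>{1..n}. w i * resp n i \<phi> (p j)) / (\<Sum>i\<in>{1..n}. w i) > 1/2))"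
proof
  assume rob: "robust n (conv_family m p) \<phi>"
  have no: "\<not>(\<exists>c. (\<forall>j\<in>{1..m}. 0 \<le> c j) \<and> sum c {1..m} = 1 \<and>
      (\<forall>i\<in>{1..n}. (\<Sum>j\<in>{1..m}. c j * (resp n i \<phi> (p j) - 1/2)) \<le> 0))"
  proof
    assume "\<exists>c. (\<forall>j\<in>{1..m}. 0 \<le> c j) \<and> sum c {1..m} = 1 \<and>
      (\<forall>i\<in>{1..n}. (\<Sum>j\<in>{1..m}. c j * (resp n i \<phi> (p j) - 1/2)) \<le> 0)"
    then obtain c where c0: "\<forall>j\<in>{1..m}. 0 \<le> c j" and c1: "sum c {1..m} = 1"
      and cle: "\<forall>i\<in>{1..n}. (\<Sum>j\<in>{1..m}. c j * (resp n i \<phi> (p j) - 1/2)) \<le> 0" by blast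
    have "(\<lambda>x. \<Sum>j\<in>{1..m}. c j * p j x) \<in> conv_family m p"
      unfolding conv_family_def using c0 c1 by blast
    then obtain i where i: "i \<in> {1..n}" "resp n i \<phi> (\<lambda>x. \<Sum>j\<in>{1..m}. c j * p j x) > 1/2"
      using rob unfolding robust_def by blast
    have "(\<Sum>j\<in>{1..m}. c j * (resp n i \<phi> (p j) - 1/2)) = resp n i \<phi> (\<lambda>x. \<Sum>j\<in>{1..m}. c j * p j x) - 1/2"
      unfolding resp_lin by (rule comb_half[OF c1])
    with cle i show False by force
  qed
  obtain w where w0: "\<forall>i\<in>{1..n}. 0 \<le> w i" and w1: "sum w {1..n} = 1"
    and wp: "\<forall>j\<in>{1..m}. (\<Sum>i\<in>{1..n}. w i * (resp n i \<phi> (p j) - 1/2)) > 0"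
    using alternative[of "{1..m}" "{1..n}" "\<lambda>j i. resp n i \<phi> (p j) - 1/2", OF _ _ _ no] n by auto
  show "\<exists>w::nat \<Rightarrow> real. (\<forall>i\<in>{1..n}. 0 \<le> w i) \<and> (\<exists>i\<in>{1..n}. w i \<noteq> 0) \<and>
        (\<forall>j\<in>{1..m}. (\<Sum>i\<in>{1..n}. w i * resp n i \<phi> (p j)) / (\<Sum>i\<in>{1..n}. w i) > 1/2)"
  proof (intro exI[of _ w] conjI ballI)
    show "0 \<le> w i" if "i \<in> {1..n}" for i using w0 that by auto
    show "\<exists>i\<in>{1..n}. w i \<noteq> 0" using w1 by (metis sum.neutral zero_neq_one)
    fix j assume "j \<in> {1..m}"
    then have "(\<Sum>i\<in>{1..n}. w i * (resp n i \<phi> (p j) - 1/2)) > 0" using wp by blast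
    then show "(\<Sum>i\<in>{1..n}. w i * resp n i \<phi> (p j)) / (\<Sum>i\<in>{1..n}. w i) > 1/2"
      using comb_half[OF w1, of "\<lambda>i. resp n i \<phi> (p j)"] w1 by simp
  qed
next
  assume "\<exists>w::nat \<Rightarrow> real. (\<forall>i\<in>{1..n}. 0 \<le> w i) \<and> (\<exists>i\<in>{1..n}. w i \<noteq> 0) \<and>
        (\<forall>j\<in>{1..m}. (\<Sum>i\<in>{1..n}. w i * resp n i \<phi> (p j)) / (\<Sum>i\<in>{1..n}. w i) > 1/2)"
  then obtain w where w0: "\<forall>i\<in>{1..n}. 0 \<le> w i" and wnz: "\<exists>i\<in>{1..n}. w i \<noteq> 0"
    and wj: "\<forall>j\<in>{1..m}. (\<Sum>i\<in>{1..n}. w i * resp n i \<phi> (p j)) / (\<Sum>i\<in>{1..n}. w i) > 1/2" by blast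
  define W where "W = (\<Sum>i\<in>{1..n}. w i)"
  have Wp: "W > 0" unfolding W_def by (rule wpos[OF w0 wnz])
  have A: "(\<Sum>i\<in>{1..n}. w i * resp n i \<phi> (p j)) - W/2 > 0" if "j \<in> {1..m}" for j
    using wj that Wp unfolding W_def[symmetric] by (simp add: less_divide_eq)
  show "robust n (conv_family m p) \<phi>"
    unfolding robust_def
  proof
    fix q assume "q \<in> conv_family m p"
    then obtain c where q: "q = (\<lambda>x. \<Sum>j\<in>{1..m}. c j * p j x)" and c0: "\<forall>j\<in>{1..m}. 0 \<le> c j"
      and c1: "(\<Sum>j\<in>{1..m}. c j) = 1" unfolding conv_family_def by blast
    show "\<exists>i\<in>{1..n}. resp n i \<phi> q > 1/2"
    proof (rule ccontr)
      assume "\<not> (\<exists>i\<in>{1..n}. resp n i \<phi> q > 1/2)"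
      hence le: "\<forall>i\<in>{1..n}. resp n i \<phi> q \<le> 1/2" by auto
      have "(\<Sum>i\<in>{1..n}. w i * resp n i \<phi> q) \<le> (\<Sum>i\<in>{1..n}. w i * (1/2))"
        using le w0 by (intro sum_mono mult_left_mono) auto
      also have "\<dots> = W/2" by (simp add: W_def sum_divide_distrib)
      finally have B: "(\<Sum>i\<in>{1..n}. w i * resp n i \<phi> q) \<le> W/2" .
      have "(\<Sum>j\<in>{1..m}. c j * ((\<Sum>i\<in>{1..n}. w i * resp n i \<phi> (p j)) - W/2)) > 0"
        using c0 c1 A by (intro pos_comb) auto
      moreover have "(\<Sum>j\<in>{1..m}. c j * ((\<Sum>i\<in>{1..n}. w i * resp n i \<phi> (p j)) - W/2)) =
          (\<Sum>i\<in>{1..n}. w i * resp n i \<phi> q) - W/2"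
      proof -
        have cw: "(\<Sum>j\<in>{1..m}. c j * (W/2)) = W/2" by (metis c1 mult_1 sum_distrib_right)
        show ?thesis unfolding q wresp_comb right_diff_distrib sum_subtractf cw ..
      qed
      ultimately show False using B by argo
    qed
  qed
qed

lemma comb_half2:
  fixes c a :: "'j \<Rightarrow> real"
  assumes "sum c J = 1"
  shows "(\<Sum>j\<in>J. c j * (1/2 - a j)) = 1/2 - (\<Sum>j\<in>J. c j * a j)"
proof -
  have "(\<Sum>j\<in>J. c j * (1/2 - a j)) = (\<Sum>j\<in>J. c j) / 2 - (\<Sum>j\<in>J. c j * a j)"
    by (simp add: right_diff_distrib sum_subtractf sum_divide_distrib)
  then show ?thesis using assms by simp
qed

lemma part3:
  assumes n: "1 \<le> n"
  shows "weakly_robust n (conv_family m p) \<phi> \<longleftrightarrow>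
     (\<exists>w::nat \<Rightarrow> real. (\<forall>i\<in>{1..n}. 0 \<le> w i) \<and> (\<exists>i\<in>{1..n}. w i \<noteq> 0) \<and>
        (\<forall>j\<in>{1..m}. (\<Sum>i\<in>{1..n}. w i * resp n i \<phi> (p j)) / (\<Sum>i\<in>{1..n}. w i) \<ge> 1/2))"
proof
  assume rob: "weakly_robust n (conv_family m p) \<phi>"
  show "\<exists>w::nat \<Rightarrow> real. (\<forall>i\<in>{1..n}. 0 \<le> w i) \<and> (\<exists>i\<in>{1..n}. w i \<noteq> 0) \<and>
        (\<forall>j\<in>{1..m}. (\<Sum>i\<in>{1..n}. w i * resp n i \<phi> (p j)) / (\<Sum>i\<in>{1..n}. w i) \<ge> 1/2)"
  proof (cases "m = 0")
    case True
    then show ?thesis using n by (intro exI[of _ "\<lambda>_. 1"]) auto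
  next
    case False
    show ?thesis
    proof (cases "\<exists>c. (\<forall>i\<in>{1..n}. 0 \<le> c i) \<and> sum c {1..n} = 1 \<and>
        (\<forall>j\<in>{1..m}. (\<Sum>i\<in>{1..n}. c i * (1/2 - resp n i \<phi> (p j))) \<le> 0)")
      case True
      then obtain c where c0: "\<forall>i\<in>{1..n}. 0 \<le> c i" and c1: "sum c {1..n} = 1" and
        cle: "\<forall>j\<in>{1..m}. (\<Sum>i\<in>{1..n}. c i * (1/2 - resp n i \<phi> (p j))) \<le> 0" by blast
      show ?thesis
      proof (intro exI[of _ c] conjI ballI)
        show "0 \<le> c i" if "i \<in> {1..n}" for i using c0 that by auto
        show "\<exists>i\<in>{1..n}. c i \<noteq> 0" using c1 by (metis sum.neutral zero_neq_one)
        fix j assume "j \<in> {1..m}"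
        then have "(\<Sum>i\<in>{1..n}. c i * (1/2 - resp n i \<phi> (p j))) \<le> 0" using cle by blast
        then show "(\<Sum>i\<in>{1..n}. c i * resp n i \<phi> (p j)) / (\<Sum>i\<in>{1..n}. c i) \<ge> 1/2"
          unfolding comb_half2[OF c1] c1 by simp
      qed
    next
      case nc: False
      obtain w where w0: "\<forall>j\<in>{1..m}. 0 \<le> w j" and w1: "sum w {1..m} = 1"
        and wp: "\<forall>i\<in>{1..n}. (\<Sum>j\<in>{1..m}. w j * (1/2 - resp n i \<phi> (p j))) > 0"
        using alternative[of "{1..n}" "{1..m}" "\<lambda>i j. 1/2 - resp n i \<phi> (p j)", OF _ _ _ nc] False
        by auto
      have "(\<lambda>x. \<Sum>j\<in>{1..m}. w j * p j x) \<in> conv_family m p"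
        unfolding conv_family_def using w0 w1 by blast
      then obtain i where i: "i \<in> {1..n}" "resp n i \<phi> (\<lambda>x. \<Sum>j\<in>{1..m}. w j * p j x) \<ge> 1/2"
        using rob unfolding weakly_robust_def by blast
      have "(\<Sum>j\<in>{1..m}. w j * (1/2 - resp n i \<phi> (p j))) = 1/2 - resp n i \<phi> (\<lambda>x. \<Sum>j\<in>{1..m}. w j * p j x)"
        unfolding resp_lin by (rule comb_half2[OF w1])
      with wp i show ?thesis by force
    qed
  qed
next
  assume "\<exists>w::nat \<Rightarrow> real. (\<forall>i\<in>{1..n}. 0 \<le> w i) \<and> (\<exists>i\<in>{1..n}. w i \<noteq> 0) \<and>
        (\<forall>j\<in>{1..m}. (\<Sum>i\<in>{1..n}. w i * resp n i \<phi> (p j)) / (\<Sum>i\<in>{1..n}. w i) \<ge> 1/2)"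
  then obtain w where w0: "\<forall>i\<in>{1..n}. 0 \<le> w i" and wnz: "\<exists>i\<in>{1..n}. w i \<noteq> 0"
    and wj: "\<forall>j\<in>{1..m}. (\<Sum>i\<in>{1..n}. w i * resp n i \<phi> (p j)) / (\<Sum>i\<in>{1..n}. w i) \<ge> 1/2" by blast
  define W where "W = (\<Sum>i\<in>{1..n}. w i)"
  have Wp: "W > 0" unfolding W_def by (rule wpos[OF w0 wnz])
  have A: "(\<Sum>i\<in>{1..n}. w i * resp n i \<phi> (p j)) - W/2 \<ge> 0" if "j \<in> {1..m}" for j
    using wj that Wp unfolding W_def[symmetric] by (simp add: le_divide_eq)
  show "weakly_robust n (conv_family m p) \<phi>"
    unfolding weakly_robust_def
  proof
    fix q assume "q \<in> conv_family m p"
    then obtain c where q: "q = (\<lambda>x. \<Sum>j\<in>{1..m}. c j * p j x)" and c0: "\<forall>j\<in>{1..m}. 0 \<le> c j"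
      and c1: "(\<Sum>j\<in>{1..m}. c j) = 1" unfolding conv_family_def by blast
    show "\<exists>i\<in>{1..n}. resp n i \<phi> q \<ge> 1/2"
    proof (rule ccontr)
      assume "\<not> (\<exists>i\<in>{1..n}. resp n i \<phi> q \<ge> 1/2)"
      hence le: "\<forall>i\<in>{1..n}. resp n i \<phi> q < 1/2" by auto
      obtain i0 where i0: "i0 \<in> {1..n}" "w i0 \<noteq> 0" using wnz by blast
      have "(\<Sum>i\<in>{1..n}. w i * resp n i \<phi> q) < (\<Sum>i\<in>{1..n}. w i * (1/2))"
      proof (rule sum_strict_mono_ex1)
        show "\<forall>i\<in>{1..n}. w i * resp n i \<phi> q \<le> w i * (1/2)"
        proof
          fix i assume "i \<in> {1..n}"
          then have "resp n i \<phi> q < 1/2" "0 \<le> w i" using le w0 by blast+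
          then have "resp n i \<phi> q \<le> 1/2" "0 \<le> w i" by simp_all
          then show "w i * resp n i \<phi> q \<le> w i * (1/2)" by (rule mult_left_mono)
        qed
        have "w i0 > 0" using w0 i0 by (metis order_le_neq_trans)
        then show "\<exists>i\<in>{1..n}. w i * resp n i \<phi> q < w i * (1/2)"
          using le i0 by (intro bexI[of _ i0]) auto
      qed simp
      also have "\<dots> = W/2" by (simp add: W_def sum_divide_distrib)
      finally have B: "(\<Sum>i\<in>{1..n}. w i * resp n i \<phi> q) < W/2" .
      have "(\<Sum>j\<in>{1..m}. c j * ((\<Sum>i\<in>{1..n}. w i * resp n i \<phi> (p j)) - W/2)) \<ge> 0"
        using c0 A by (intro nonneg_comb) auto
      moreover have "(\<Sum>j\<in>{1..m}. c j * ((\<Sum>i\<in>{1..n}. w i * resp n i \<phi> (p j)) - W/2)) =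
          (\<Sum>i\<in>{1..n}. w i * resp n i \<phi> q) - W/2"
      proof -
        have cw: "(\<Sum>j\<in>{1..m}. c j * (W/2)) = W/2" by (metis c1 mult_1 sum_distrib_right)
        show ?thesis unfolding q wresp_comb right_diff_distrib sum_subtractf cw ..
      qed
      ultimately show False using B by argo
    qed
  qed
qed

lemma sum_ind:
  fixes w :: "nat \<Rightarrow> real"
  assumes "x \<in> profiles n" "voting_rule n \<phi>"
  shows "(\<Sum>i\<in>{1..n}. w i * ((if \<phi> x = x i then 1 else 0) - 1/2)) =
         of_int (\<phi> x) * (\<Sum>i\<in>{1..n}. w i * of_int (x i)) / 2"
proof -
  have "(\<Sum>i\<in>{1..n}. w i * ((if \<phi> x = x i then 1 else 0) - 1/2)) =
        (\<Sum>i\<in>{1..n}. of_int (\<phi> x) * (w i * of_int (x i)) / 2)"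
    by (intro sum.cong refl) (simp add: ind_eq[OF assms(1) _ assms(2)] field_simps)
  also have "\<dots> = of_int (\<phi> x) * (\<Sum>i\<in>{1..n}. w i * of_int (x i)) / 2"
    by (simp add: sum_distrib_left sum_divide_distrib)
  finally show ?thesis .
qed

lemma sum_ind2:
  fixes w :: "nat \<Rightarrow> real"
  assumes "x \<in> profiles n" "voting_rule n \<phi>"
  shows "(\<Sum>i\<in>{1..n}. w i * (1/2 - (if \<phi> x = x i then 1 else 0))) =
         - (of_int (\<phi> x) * (\<Sum>i\<in>{1..n}. w i * of_int (x i)) / 2)"
proof -
  have "(\<Sum>i\<in>{1..n}. w i * (1/2 - (if \<phi> x = x i then 1 else 0))) =
        - (\<Sum>i\<in>{1..n}. w i * ((if \<phi> x = x i then 1 else 0) - 1/2))"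
    by (simp add: sum_negf[symmetric] algebra_simps)
  then show ?thesis using sum_ind[OF assms] by simp
qed

lemma wmr_of:
  assumes "voting_rule n \<phi>" "\<exists>i\<in>{1..n}. w i \<noteq> 0"
    and "\<forall>x\<in>profiles n. of_int (\<phi> x) * (\<Sum>i\<in>{1..n}. w i * of_int (x i)) \<ge> (0::real)"
  shows "is_wmr n w \<phi>"
  unfolding is_wmr_def
proof (intro conjI ballI impI)
  show "\<exists>i\<in>{1..n}. w i \<noteq> 0" by fact
  fix x assume x: "x \<in> profiles n"
  have phi: "\<phi> x = -1 \<or> \<phi> x = 1" using assms(1) x by (auto simp: voting_rule_def)
  have pr: "of_int (\<phi> x) * (\<Sum>i\<in>{1..n}. w i * of_int (x i)) \<ge> (0::real)" using assms(3) x by blast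
  { assume "(\<Sum>i\<in>{1..n}. w i * of_int (x i)) > 0"
    then show "\<phi> x = 1" using phi pr by auto }
  { assume "(\<Sum>i\<in>{1..n}. w i * of_int (x i)) < 0"
    then show "\<phi> x = -1" using phi pr by auto }
qed

lemma prod_of_wmr:
  assumes "voting_rule n \<phi>" "is_wmr n w \<phi>" "x \<in> profiles n"
  shows "of_int (\<phi> x) * (\<Sum>i\<in>{1..n}. w i * of_int (x i)) \<ge> (0::real)"
    and "no_ties n w \<Longrightarrow> of_int (\<phi> x) * (\<Sum>i\<in>{1..n}. w i * of_int (x i)) > (0::real)"
proof -
  define s where "s = (\<Sum>i\<in>{1..n}. w i * of_int (x i))"
  have h1: "s > 0 \<Longrightarrow> \<phi> x = 1" and h2: "s < 0 \<Longrightarrow> \<phi> x = -1"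
    using assms(2,3) unfolding is_wmr_def s_def by auto
  have A: "of_int (\<phi> x) * s \<ge> 0"
  proof (cases s "0::real" rule: linorder_cases)
    case less then show ?thesis using h2 mult_nonpos_nonpos[of "-1" s] by simp
  next
    case equal then show ?thesis by simp
  next
    case greater then show ?thesis using h1 by simp
  qed
  then show "of_int (\<phi> x) * (\<Sum>i\<in>{1..n}. w i * of_int (x i)) \<ge> (0::real)" by (simp add: s_def)
  assume "no_ties n w"
  then have ne: "s \<noteq> 0" using assms(3) unfolding no_ties_def s_def by blast
  have "of_int (\<phi> x) * s > 0"
  proof (cases s "0::real" rule: linorder_cases)
    case less then show ?thesis using h2 by simp
  next
    case equal then show ?thesis using ne by simp
  next
    case greater then show ?thesis using h1 by simp
  qed
  then show "of_int (\<phi> x) * (\<Sum>i\<in>{1..n}. w i * of_int (x i)) > (0::real)" by (simp add: s_def)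
qed

lemma pointmass:
  assumes "\<forall>x\<in>profiles n. 0 \<le> c x" "sum c (profiles n) = 1"
  shows "(\<lambda>x. if x \<in> profiles n then c x else 0) \<in> distributions n"
    and "resp n i \<phi> (\<lambda>x. if x \<in> profiles n then c x else 0) =
         (\<Sum>x\<in>profiles n. c x * (if \<phi> x = x i then 1 else 0))"
proof -
  have "sum (\<lambda>x. if x \<in> profiles n then c x else 0) (profiles n) = 1"
    using assms(2) by (simp cong: sum.cong)
  then show "(\<lambda>x. if x \<in> profiles n then c x else 0) \<in> distributions n"
    using assms(1) unfolding distributions_def by auto
  show "resp n i \<phi> (\<lambda>x. if x \<in> profiles n then c x else 0) =
         (\<Sum>x\<in>profiles n. c x * (if \<phi> x = x i then 1 else 0))"
    unfolding resp_ind by (simp cong: sum.cong)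
qed

lemma dist_sum: "p \<in> distributions n \<Longrightarrow> sum p (profiles n) = 1"
  and dist_nonneg: "p \<in> distributions n \<Longrightarrow> \<forall>x\<in>profiles n. 0 \<le> p x"
  by (auto simp: distributions_def)

lemma part2:
  assumes n: "1 \<le> n" and rule: "voting_rule n \<phi>"
  shows "robust n (distributions n) \<phi> \<longleftrightarrow>
     (\<exists>w::nat \<Rightarrow> real. (\<forall>i\<in>{1..n}. 0 \<le> w i) \<and> is_wmr n w \<phi> \<and> no_ties n w)"
proof
  assume rob: "robust n (distributions n) \<phi>"
  have no: "\<not>(\<exists>c. (\<forall>x\<in>profiles n. 0 \<le> c x) \<and> sum c (profiles n) = 1 \<and>
      (\<forall>i\<in>{1..n}. (\<Sum>x\<in>profiles n. c x * ((if \<phi> x = x i then 1 else 0) - 1/2)) \<le>(0::real)))"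
  proof
    assume "\<exists>c. (\<forall>x\<in>profiles n. 0 \<le> c x) \<and> sum c (profiles n) = 1 \<and>
      (\<forall>i\<in>{1..n}. (\<Sum>x\<in>profiles n. c x * ((if \<phi> x = x i then 1 else 0) - 1/2)) \<le>(0::real))"
    then obtain c where c0: "\<forall>x\<in>profiles n. 0 \<le> c x" and c1: "sum c (profiles n) = 1"
      and cle: "\<forall>i\<in>{1..n}. (\<Sum>x\<in>profiles n. c x * ((if \<phi> x = x i then 1 else 0) - 1/2)) \<le> (0::real)"
      by blast
    obtain i where i: "i \<in> {1..n}" "resp n i \<phi> (\<lambda>x. if x \<in> profiles n then c x else 0) > 1/2"
      using rob pointmass(1)[OF c0 c1] unfolding robust_def by blast
    have "(\<Sum>x\<in>profiles n. c x * ((if \<phi> x = x i then 1 else 0) - 1/2)) =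
          resp n i \<phi> (\<lambda>x. if x \<in> profiles n then c x else 0) - 1/2"
      unfolding pointmass(2)[OF c0 c1] by (rule comb_half[OF c1])
    moreover have "(\<Sum>x\<in>profiles n. c x * ((if \<phi> x = x i then 1 else 0) - 1/2)) \<le> (0::real)"
      using cle i(1) by blast
    ultimately show False using i(2) by argo
  qed
  have ne: "{1..n} \<noteq> {}" using n by simp
  obtain w where w0: "\<forall>i\<in>{1..n}. 0 \<le> w i" and w1: "sum w {1..n} = 1"
    and wp: "\<forall>x\<in>profiles n. (\<Sum>i\<in>{1..n}. w i * ((if \<phi> x = x i then 1 else 0) - 1/2)) > (0::real)"
    using alternative[OF finite_profiles finite_atLeastAtMost ne no] by blast
  have nz: "\<exists>i\<in>{1..n}. w i \<noteq> 0" using w1 by (metis sum.neutral zero_neq_one)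
  have pos: "of_int (\<phi> x) * (\<Sum>i\<in>{1..n}. w i * of_int (x i)) > (0::real)" if "x \<in> profiles n" for x
  proof -
    have "(\<Sum>i\<in>{1..n}. w i * ((if \<phi> x = x i then 1 else 0) - 1/2)) > (0::real)"
      using wp that by blast
    then show ?thesis using sum_ind[OF that rule, of w] by argo
  qed
  show "\<exists>w::nat \<Rightarrow> real. (\<forall>i\<in>{1..n}. 0 \<le> w i) \<and> is_wmr n w \<phi> \<and> no_ties n w"
  proof (intro exI[of _ w] conjI)
    show "\<forall>i\<in>{1..n}. 0 \<le> w i" by fact
    show "is_wmr n w \<phi>" using pos by (intro wmr_of[OF rule nz] ballI less_imp_le)
    show "no_ties n w" unfolding no_ties_def
    proof
      fix x assume "x \<in> profiles n"
      from pos[OF this] show "(\<Sum>i\<in>{1..n}. w i * of_int (x i)) \<noteq> 0" by auto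
    qed
  qed
next
  assume "\<exists>w::nat \<Rightarrow> real. (\<forall>i\<in>{1..n}. 0 \<le> w i) \<and> is_wmr n w \<phi> \<and> no_ties n w"
  then obtain w :: "nat \<Rightarrow> real" where w0: "\<forall>i\<in>{1..n}. 0 \<le> w i" and wm: "is_wmr n w \<phi>"
    and nt: "no_ties n w" by blast
  have wnz: "\<exists>i\<in>{1..n}. w i \<noteq> 0" using wm unfolding is_wmr_def by blast
  define W where "W = (\<Sum>i\<in>{1..n}. w i)"
  have Wp: "W > 0" unfolding W_def by (rule wpos[OF w0 wnz])
  show "robust n (distributions n) \<phi>"
    unfolding robust_def
  proof
    fix q assume q: "q \<in> distributions n"
    show "\<exists>i\<in>{1..n}. resp n i \<phi> q > 1/2"
    proof (rule ccontr)
      assume "\<not> (\<exists>i\<in>{1..n}. resp n i \<phi> q > 1/2)"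
      hence le: "\<forall>i\<in>{1..n}. resp n i \<phi> q \<le> 1/2" by auto
      have "(\<Sum>i\<in>{1..n}. w i * resp n i \<phi> q) \<le> (\<Sum>i\<in>{1..n}. w i * (1/2))"
        using le w0 by (intro sum_mono mult_left_mono) auto
      also have "\<dots> = W/2" by (simp add: W_def sum_divide_distrib)
      finally have B: "(\<Sum>i\<in>{1..n}. w i * resp n i \<phi> q) \<le> W/2" .
      have "(\<Sum>x\<in>profiles n. q x * (of_int (\<phi> x) * (\<Sum>i\<in>{1..n}. w i * of_int (x i)))) > 0"
        by (rule pos_comb[OF finite_profiles dist_nonneg[OF q] dist_sum[OF q]])
           (use prod_of_wmr(2)[OF rule wm _ nt] in blast)
      moreover have "(\<Sum>i\<in>{1..n}. w i * resp n i \<phi> q) =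
          (W + (\<Sum>x\<in>profiles n. q x * (of_int (\<phi> x) * (\<Sum>i\<in>{1..n}. w i * of_int (x i))))) / 2"
        unfolding wsum[OF rule] dist_sum[OF q] W_def by (simp add: mult.assoc)
      ultimately show False using B by argo
    qed
  qed
qed

lemma part4:
  assumes n: "1 \<le> n" and rule: "voting_rule n \<phi>"
  shows "weakly_robust n (distributions n) \<phi> \<longleftrightarrow>
     (\<exists>w::nat \<Rightarrow> real. (\<forall>i\<in>{1..n}. 0 \<le> w i) \<and> is_wmr n w \<phi>)"
proof
  assume rob: "weakly_robust n (distributions n) \<phi>"
  show "\<exists>w::nat \<Rightarrow> real. (\<forall>i\<in>{1..n}. 0 \<le> w i) \<and> is_wmr n w \<phi>"
  proof (cases "\<exists>c. (\<forall>i\<in>{1..n}. 0 \<le> c i) \<and> sum c {1..n} = 1 \<and>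
        (\<forall>x\<in>profiles n. (\<Sum>i\<in>{1..n}. c i * (1/2 - (if \<phi> x = x i then 1 else 0))) \<le> (0::real))")
    case True
    then obtain c :: "nat \<Rightarrow> real" where c0: "\<forall>i\<in>{1..n}. 0 \<le> c i" and c1: "sum c {1..n} = 1" and
      cle: "\<forall>x\<in>profiles n. (\<Sum>i\<in>{1..n}. c i * (1/2 - (if \<phi> x = x i then 1 else 0))) \<le> (0::real)"
      by blast
    have nz: "\<exists>i\<in>{1..n}. c i \<noteq> 0" using c1 by (metis sum.neutral zero_neq_one)
    have "of_int (\<phi> x) * (\<Sum>i\<in>{1..n}. c i * of_int (x i)) \<ge> (0::real)" if "x \<in> profiles n" for x
    proof -
      have "(\<Sum>i\<in>{1..n}. c i * (1/2 - (if \<phi> x = x i then 1 else 0))) \<le> (0::real)"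
        using cle that by blast
      then show ?thesis using sum_ind2[OF that rule, of c] by linarith
    qed
    then show ?thesis using c0 wmr_of[OF rule nz] by blast
  next
    case nc: False
    have ne: "profiles n \<noteq> {}" using profiles_ne by blast
    obtain w where w0: "\<forall>x\<in>profiles n. 0 \<le> w x" and w1: "sum w (profiles n) = 1"
      and wp: "\<forall>i\<in>{1..n}. (\<Sum>x\<in>profiles n. w x * (1/2 - (if \<phi> x = x i then 1 else 0))) > (0::real)"
      using alternative[OF finite_atLeastAtMost finite_profiles ne nc] by blast
    obtain i where i: "i \<in> {1..n}" "resp n i \<phi> (\<lambda>x. if x \<in> profiles n then w x else 0) \<ge> 1/2"
      using rob pointmass(1)[OF w0 w1] unfolding weakly_robust_def by blast
    have "(\<Sum>x\<in>profiles n. w x * (1/2 - (if \<phi> x = x i then 1 else 0))) =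
          1/2 - resp n i \<phi> (\<lambda>x. if x \<in> profiles n then w x else 0)"
      unfolding pointmass(2)[OF w0 w1] by (rule comb_half2[OF w1])
    moreover have "(\<Sum>x\<in>profiles n. w x * (1/2 - (if \<phi> x = x i then 1 else 0))) > (0::real)"
      using wp i(1) by blast
    ultimately show ?thesis using i(2) by argo
  qed
next
  assume "\<exists>w::nat \<Rightarrow> real. (\<forall>i\<in>{1..n}. 0 \<le> w i) \<and> is_wmr n w \<phi>"
  then obtain w :: "nat \<Rightarrow> real" where w0: "\<forall>i\<in>{1..n}. 0 \<le> w i" and wm: "is_wmr n w \<phi>" by blast
  have wnz: "\<exists>i\<in>{1..n}. w i \<noteq> 0" using wm unfolding is_wmr_def by blast
  define W where "W = (\<Sum>i\<in>{1..n}. w i)"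
  have Wp: "W > 0" unfolding W_def by (rule wpos[OF w0 wnz])
  show "weakly_robust n (distributions n) \<phi>"
    unfolding weakly_robust_def
  proof
    fix q assume q: "q \<in> distributions n"
    show "\<exists>i\<in>{1..n}. resp n i \<phi> q \<ge> 1/2"
    proof (rule ccontr)
      assume "\<not> (\<exists>i\<in>{1..n}. resp n i \<phi> q \<ge> 1/2)"
      hence le: "\<forall>i\<in>{1..n}. resp n i \<phi> q < 1/2" by auto
      obtain i0 where i0: "i0 \<in> {1..n}" "w i0 \<noteq> 0" using wnz by blast
      have "(\<Sum>i\<in>{1..n}. w i * resp n i \<phi> q) < (\<Sum>i\<in>{1..n}. w i * (1/2))"
      proof (rule sum_strict_mono_ex1)
        show "\<forall>i\<in>{1..n}. w i * resp n i \<phi> q \<le> w i * (1/2)"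
        proof
          fix i assume "i \<in> {1..n}"
          then have "resp n i \<phi> q < 1/2" "0 \<le> w i" using le w0 by blast+
          then have "resp n i \<phi> q \<le> 1/2" "0 \<le> w i" by simp_all
          then show "w i * resp n i \<phi> q \<le> w i * (1/2)" by (rule mult_left_mono)
        qed
        have "w i0 > 0" using w0 i0 by (metis order_le_neq_trans)
        then show "\<exists>i\<in>{1..n}. w i * resp n i \<phi> q < w i * (1/2)"
          using le i0 by (intro bexI[of _ i0]) auto
      qed simp
      also have "\<dots> = W/2" by (simp add: W_def sum_divide_distrib)
      finally have B: "(\<Sum>i\<in>{1..n}. w i * resp n i \<phi> q) < W/2" .
      have "(\<Sum>x\<in>profiles n. q x * (of_int (\<phi> x) * (\<Sum>i\<in>{1..n}. w i * of_int (x i)))) \<ge> 0"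
        by (rule nonneg_comb[OF dist_nonneg[OF q]]) (use prod_of_wmr(1)[OF rule wm] in blast)
      moreover have "(\<Sum>i\<in>{1..n}. w i * resp n i \<phi> q) =
          (W + (\<Sum>x\<in>profiles n. q x * (of_int (\<phi> x) * (\<Sum>i\<in>{1..n}. w i * of_int (x i))))) / 2"
        unfolding wsum[OF rule] dist_sum[OF q] W_def by (simp add: mult.assoc)
      ultimately show False using B by argo
    qed
  qed
qed

theorem proposition1:
  fixes n m :: nat
    and p :: "nat \<Rightarrow> ((nat \<Rightarrow> int) \<Rightarrow> real)"
    and \<phi> :: "(nat \<Rightarrow> int) \<Rightarrow> int"
  assumes n_pos: "1 \<le> n"
    and family: "p ` {1..m} \<subset> distributions n"
    and rule: "voting_rule n \<phi>"
  shows "(robust n (conv_family m p) \<phi> \<longleftrightarrow>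
            (\<exists>w::nat \<Rightarrow> real. (\<forall>i\<in>{1..n}. 0 \<le> w i) \<and> (\<exists>i\<in>{1..n}. w i \<noteq> 0) \<and>
               (\<forall>j\<in>{1..m}. (\<Sum>i\<in>{1..n}. w i * resp n i \<phi> (p j)) / (\<Sum>i\<in>{1..n}. w i) > 1/2)))
       \<and> (robust n (distributions n) \<phi> \<longleftrightarrow>
            (\<exists>w::nat \<Rightarrow> real. (\<forall>i\<in>{1..n}. 0 \<le> w i) \<and> is_wmr n w \<phi> \<and> no_ties n w))
       \<and> (weakly_robust n (conv_family m p) \<phi> \<longleftrightarrow>
            (\<exists>w::nat \<Rightarrow> real. (\<forall>i\<in>{1..n}. 0 \<le> w i) \<and> (\<exists>i\<in>{1..n}. w i \<noteq> 0) \<and>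
               (\<forall>j\<in>{1..m}. (\<Sum>i\<in>{1..n}. w i * resp n i \<phi> (p j)) / (\<Sum>i\<in>{1..n}. w i) \<ge> 1/2)))
       \<and> (weakly_robust n (distributions n) \<phi> \<longleftrightarrow>
            (\<exists>w::nat \<Rightarrow> real. (\<forall>i\<in>{1..n}. 0 \<le> w i) \<and> is_wmr n w \<phi>))"
  by (rule conjI[OF part1[OF n_pos] conjI[OF part2[OF n_pos rule] conjI[OF part3[OF n_pos] part4[OF n_pos rule]]]])

end
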